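(* Assume the standing hypotheses described in the context. For any $y\in B(x_0,R)$, \[-f(\|y-x_0\|)\le\|F'(x_0)^{-1}F(y)\|\le f(\|y-x_0\|)+2\|y-x_0\|.\]
   Context: Standing hypotheses: $\mathbb X,\mathbb Y$ are Banach spaces; $B(x,r)$ is the open ball. $R\in\mathbb R$, $C\subseteq\mathbb X$, $F:C\to\mathbb Y$ is continuous and continuously differentiable on $\mathrm{int}(C)$, $x_0\in\mathrm{int}(C)$ with $F'(x_0)$ non-singular, $f:[0,R)\to\mathbb R$ is continuously differentiable, $B(x_0,R)\subseteq C$, $\|F'(x_0)^{-1}[F'(y)-F'(x)]\|\le f'(\|y-x\|+\|x-x_0\|)-f'(\|x-x_0\|)$ for all $x,y\in B(x_0,R)$ with $\|x-x_0\|+\|y-x\|<R$, $\|F'(x_0)^{-1}F(x_0)\|\le f(0)$, and (h1) $f(0)>0$, $f'(0)=-1$; (h2) $f'$ is strictly increasing and convex; (h3) $f(t)<0$ for some $t\in(0,R)$. *)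

theory Defs
  imports "HOL-Analysis.Analysis"
begin

end

theory Submission
  imports Defs
begin

theorem corollary3p5:
  fixes F :: "'a::banach \<Rightarrow> 'b::banach"
    and F' :: "'a \<Rightarrow> ('a \<Rightarrow>\<^sub>L 'b)"
    and Finv0 :: "'b \<Rightarrow>\<^sub>L 'a"
    and C :: "'a set" and x0 :: 'a and R :: real
    and f f' :: "real \<Rightarrow> real"
  assumes F_cont: "continuous_on C F"
    and F_deriv: "\<And>x. x \<in> interior C \<Longrightarrow> (F has_derivative blinfun_apply (F' x)) (at x)"
    and F'_cont: "continuous_on (interior C) F'"
    and x0_int: "x0 \<in> interior C"
    and inv_left: "Finv0 o\<^sub>L F' x0 = id_blinfun"
    and inv_right: "F' x0 o\<^sub>L Finv0 = id_blinfun"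
    and f_deriv: "\<And>t. t \<in> {0..<R} \<Longrightarrow> (f has_real_derivative f' t) (at t within {0..<R})"
    and f'_cont: "continuous_on {0..<R} f'"
    and ball_sub: "ball x0 R \<subseteq> C"
    and majorant: "\<And>x y. x \<in> ball x0 R \<Longrightarrow> y \<in> ball x0 R \<Longrightarrow>
        norm (x - x0) + norm (y - x) < R \<Longrightarrow>
        norm (Finv0 o\<^sub>L (F' y - F' x)) \<le> f' (norm (y - x) + norm (x - x0)) - f' (norm (x - x0))"
    and init: "norm (Finv0 (F x0)) \<le> f 0"
    and h1: "f 0 > 0" "f' 0 = -1"
    and h2: "strict_mono_on {0..<R} f'" "convex_on {0..<R} f'"
    and h3: "\<exists>t\<in>{0<..<R}. f t < 0"
    and y_in: "y \<in> ball x0 R"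
  shows "- f (norm (y - x0)) \<le> norm (Finv0 (F y))
         \<and> norm (Finv0 (F y)) \<le> f (norm (y - x0)) + 2 * norm (y - x0)"
proof -
  define d where "d = y - x0"
  define t where "t = norm d"
  have tR: "t < R" using y_in by (simp add: t_def d_def dist_norm norm_minus_commute)
  have t0: "0 \<le> t" by (simp add: t_def)
  have ballint: "ball x0 R \<subseteq> interior C"
    using ball_sub interior_maximal open_ball by blast
  have inball: "x0 + s *\<^sub>R d \<in> ball x0 R" if "s \<in> {0..1}" for s
  proof -
    have "norm (s *\<^sub>R d) = s * t" using that by (simp add: t_def)
    also have "\<dots> \<le> t" using that t0 by (simp add: mult_left_le_one_le)
    finally show ?thesis using tR by (simp add: dist_norm)
  qed
  define h where "h s = Finv0 (F (x0 + s *\<^sub>R d)) - s *\<^sub>R d" for s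
  define h' where "h' s = Finv0 (F' (x0 + s *\<^sub>R d) d) - d" for s
  have hder: "(h has_vector_derivative h' s) (at s within {0..1})" if s: "s \<in> {0..1}" for s
  proof -
    have xi: "x0 + s *\<^sub>R d \<in> interior C" using inball[OF s] ballint by blast
    have lin: "((\<lambda>s. x0 + s *\<^sub>R d) has_derivative (\<lambda>h. h *\<^sub>R d)) (at s within {0..1})"
      by (auto intro!: derivative_eq_intros)
    have c1: "((\<lambda>s. F (x0 + s *\<^sub>R d)) has_derivative (\<lambda>h. F' (x0 + s *\<^sub>R d) (h *\<^sub>R d))) (at s within {0..1})"
      using has_derivative_compose[OF lin F_deriv[OF xi]] by simp
    have c2: "((\<lambda>s. Finv0 (F (x0 + s *\<^sub>R d))) has_derivative (\<lambda>h. Finv0 (F' (x0 + s *\<^sub>R d) (h *\<^sub>R d)))) (at s within {0..1})"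
      using bounded_linear.has_derivative[OF blinfun.bounded_linear_right c1] .
    have c4: "((\<lambda>s. s *\<^sub>R d) has_derivative (\<lambda>u. u *\<^sub>R d)) (at s within {0..1})"
      by (auto intro!: derivative_eq_intros)
    have c3: "(h has_derivative (\<lambda>u. Finv0 (F' (x0 + s *\<^sub>R d) (u *\<^sub>R d)) - u *\<^sub>R d)) (at s within {0..1})"
      unfolding h_def using has_derivative_diff[OF c2 c4] .
    show ?thesis unfolding has_vector_derivative_def h'_def
      using c3 by (simp add: blinfun.scaleR_right scaleR_diff_right)
  qed
  have hint: "(h' has_integral (h 1 - h 0)) {0..1}"
    by (rule fundamental_theorem_of_calculus) (auto intro: hder)
  define g where "g s = f (s * t) + s * t" for s
  define g' where "g' s = t * (f' (s * t) + 1)" for s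
  have gder: "(g has_vector_derivative g' s) (at s within {0..1})" if s: "s \<in> {0..1}" for s
  proof -
    have img: "(\<lambda>s. s * t) ` {0..1} \<subseteq> {0..<R}"
    proof
      fix u assume "u \<in> (\<lambda>s. s * t) ` {0..1}"
      then obtain v where v: "v \<in> {0..1}" "u = v * t" by auto
      have "v * t \<le> t" using v t0 by (simp add: mult_left_le_one_le)
      then show "u \<in> {0..<R}" using v t0 tR by auto
    qed
    have st: "s * t \<in> {0..<R}" using img s by blast
    have fd: "(f has_field_derivative f' (s * t)) (at (s * t) within (\<lambda>s. s * t) ` {0..1})"
      using DERIV_subset[OF f_deriv[OF st] img] .
    have ld: "((\<lambda>s. s * t) has_field_derivative t) (at s within {0..1})"
      by (auto intro!: derivative_eq_intros)
    have "((\<lambda>s. f (s * t)) has_field_derivative f' (s * t) * t) (at s within {0..1})"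
      using DERIV_image_chain[OF fd ld] by (simp add: o_def)
    then have "(g has_field_derivative f' (s * t) * t + t) (at s within {0..1})"
      unfolding g_def by (auto intro!: derivative_eq_intros)
    then show ?thesis unfolding has_real_derivative_iff_has_vector_derivative[symmetric] g'_def
      by (simp add: algebra_simps)
  qed
  have gint: "(g' has_integral (g 1 - g 0)) {0..1}"
    by (rule fundamental_theorem_of_calculus) (auto intro: gder)
  have bnd: "norm (h' s) \<le> g' s" if s: "s \<in> {0..1}" for s
  proof -
    let ?x = "x0 + s *\<^sub>R d"
    have xb: "?x \<in> ball x0 R" using inball[OF s] .
    have nx: "norm (?x - x0) = s * t" using s by (simp add: t_def)
    have "Finv0 (F' x0 d) = d"
      using arg_cong[OF inv_left, of "\<lambda>L. blinfun_apply L d"] by simp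
    then have "h' s = (Finv0 o\<^sub>L (F' ?x - F' x0)) d"
      by (simp add: h'_def blinfun.diff_left blinfun.diff_right)
    then have "norm (h' s) \<le> norm (Finv0 o\<^sub>L (F' ?x - F' x0)) * t"
      by (metis norm_blinfun t_def)
    also have "\<dots> \<le> (f' (s * t) - f' 0) * t"
    proof (rule mult_right_mono[OF _ t0])
      have lt: "norm (x0 - x0) + norm (?x - x0) < R" using xb by (simp add: dist_norm norm_minus_commute)
      then show "norm (Finv0 o\<^sub>L (F' ?x - F' x0)) \<le> f' (s * t) - f' 0"
      proof -
        have "0 < R" using t0 tR by linarith
        then show ?thesis using majorant[OF _ xb lt] nx by simp
      qed
    qed
    finally show ?thesis using h1(2) by (simp add: g'_def algebra_simps)
  qed
  have key: "norm (h 1 - h 0) \<le> g 1 - g 0"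
    using integral_norm_bound_integral[OF has_integral_integrable[OF hint] has_integral_integrable[OF gint] bnd]
      integral_unique[OF hint] integral_unique[OF gint] by simp
  have e1: "h 1 - h 0 = Finv0 (F y) - d - Finv0 (F x0)" by (simp add: h_def d_def)
  have e2: "g 1 - g 0 = f t + t - f 0" by (simp add: g_def)
  have key2: "norm (Finv0 (F y) - d - Finv0 (F x0)) \<le> f t + t - f 0" using key e1 e2 by simp
  have ty: "norm (y - x0) = t" by (simp add: t_def d_def)
  have up: "norm (Finv0 (F y)) \<le> f t + 2 * t"
  proof -
    have e: "Finv0 (F y) = (Finv0 (F y) - d - Finv0 (F x0)) + d + Finv0 (F x0)" by simp
    have "norm (Finv0 (F y)) \<le> norm (Finv0 (F y) - d - Finv0 (F x0)) + norm d + norm (Finv0 (F x0))"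
      by (subst e) (meson add_mono norm_triangle_ineq order_refl order_trans)
    then show ?thesis using key2 init by (simp add: t_def)
  qed
  have lo: "- f t \<le> norm (Finv0 (F y))"
  proof -
    have e: "d = - (Finv0 (F y) - d - Finv0 (F x0)) + Finv0 (F y) - Finv0 (F x0)" by simp
    have "norm d \<le> norm (- (Finv0 (F y) - d - Finv0 (F x0))) + norm (Finv0 (F y)) + norm (Finv0 (F x0))"
      by (subst e) (meson add_mono norm_triangle_ineq norm_triangle_ineq4 order_refl order_trans)
    then show ?thesis using key2 init unfolding norm_minus_cancel t_def by linarith
  qed
  show ?thesis using up lo ty by simp
qed

end
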